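(* Assume (L). For $\nu>0$ define $\bar{\mathcal N}_\nu=\{x:f(x)\le f(x^\star)+\nu\lambda_{\min}^3/L^2\}$. Then for every $\nu\in(0,1]$, $$\bar{\mathcal N}_{\nu^2/3}\subseteq\mathcal N_\nu\subseteq\bar{\mathcal N}_{\nu^2}.$$
   Context: $f:\mathbb{R}^d\to\mathbb{R}$ is twice continuously differentiable with Hessian $H(x)=\nabla^2 f(x)$ satisfying $\lambda_{\min} I\preceq H(x)\preceq \lambda_{\max} I$ for all $x$, where $0<\lambda_{\min}\le\lambda_{\max}$; $x^\star$ is the unique minimizer of $f$ and $H^\star=H(x^\star)$; $\|v\|_A=\sqrt{v^\top Av}$. Lipschitz Hessian assumption (L): $\|H(x)-H(y)\|\le L\|x-y\|$ for all $x,y$ (spectral/Euclidean norms). Neighborhood: $\mathcal N_\nu=\{x:\|x-x^\star\|_{H^\star}\le \nu\lambda_{\min}^{3/2}/L\}$. *)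

theory Defs
  imports "HOL-Analysis.Analysis"
begin

definition anorm :: "real^'n^'n \<Rightarrow> real^'n \<Rightarrow> real" where
  "anorm A v = sqrt (v \<bullet> (A *v v))"

definition nbhd :: "real^'n^'n \<Rightarrow> real^'n \<Rightarrow> real \<Rightarrow> real \<Rightarrow> real \<Rightarrow> (real^'n) set" where
  "nbhd Hs xs lmin L nu = {x. anorm Hs (x - xs) \<le> nu * lmin powr (3/2) / L}"

definition nbhd_bar :: "(real^'n \<Rightarrow> real) \<Rightarrow> real^'n \<Rightarrow> real \<Rightarrow> real \<Rightarrow> real \<Rightarrow> (real^'n) set" where
  "nbhd_bar f xs lmin L nu = {x. f x \<le> f xs + nu * lmin ^ 3 / L ^ 2}"

end

theory Submission imports Defs begin
lemma taylor_up:
  fixes phi psi psi2 :: "real \<Rightarrow> real"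
  assumes d1: "\<And>t. DERIV phi t :> psi t" and d2: "\<And>t. DERIV psi t :> psi2 t"
    and z: "psi 0 = 0" and b: "\<And>t. 0 \<le> t \<Longrightarrow> t \<le> 1 \<Longrightarrow> psi2 t \<le> a + c*t"
  shows "phi 1 - phi 0 \<le> a/2 + c/6"
proof -
  define w where "w t = psi t - a*t - c*t^2/2" for t
  have dw: "DERIV w t :> psi2 t - a - c*t" for t
    unfolding w_def by (auto intro!: derivative_eq_intros d2)
  have w0: "w t \<le> 0" if "0 \<le> t" "t \<le> 1" for t
  proof -
    have "(\<lambda>t. - w t) 0 \<le> (\<lambda>t. - w t) t"
      apply (rule DERIV_nonneg_imp_nondecreasing[OF that(1)])
      subgoal for x using dw[of x] b[of x] that
        by (intro exI[of _ "-(psi2 x - a - c*x)"]) (auto intro!: derivative_eq_intros)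
      done
    then show ?thesis using z by (simp add: w_def)
  qed
  define u where "u t = phi t - a*t^2/2 - c*t^3/6" for t
  have du: "DERIV u t :> w t" for t
    unfolding u_def w_def by (auto intro!: derivative_eq_intros d1 simp: power2_eq_square power3_eq_cube)
  have "(\<lambda>t. - u t) 0 \<le> (\<lambda>t. - u t) 1"
    apply (rule DERIV_nonneg_imp_nondecreasing[of 0 1])
     apply simp
    subgoal for x using du[of x] w0[of x]
      by (intro exI[of _ "- w x"]) (auto intro!: derivative_eq_intros)
    done
  then show ?thesis by (simp add: u_def)
qed

lemma mono1:
  fixes phi psi psi2 :: "real \<Rightarrow> real"
  assumes d1: "\<And>t. DERIV phi t :> psi t" and d2: "\<And>t. DERIV psi t :> psi2 t"
    and z: "psi 0 = 0" and b: "\<And>t. 0 \<le> t \<Longrightarrow> t \<le> 1 \<Longrightarrow> 0 \<le> psi2 t"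
    and t: "0 \<le> t" "t \<le> 1"
  shows "phi t \<le> phi 1"
proof -
  have p: "0 \<le> psi s" if "0 \<le> s" "s \<le> 1" for s
    using DERIV_nonneg_imp_nondecreasing[of 0 s psi] d2 b that z by fastforce
  show ?thesis
    using DERIV_nonneg_imp_nondecreasing[of t 1 phi] d1 p t by fastforce
qed
lemma vec_facts:
  fixes f :: "real^'n \<Rightarrow> real"
    and g :: "real^'n \<Rightarrow> real^'n"
    and H :: "real^'n \<Rightarrow> real^'n^'n"
  assumes grad: "\<And>x. (f has_derivative (\<lambda>h. g x \<bullet> h)) (at x)"
    and hess: "\<And>x. (g has_derivative (\<lambda>h. H x *v h)) (at x)"
  shows "DERIV (\<lambda>t. f (xs + t *\<^sub>R d)) t :> g (xs + t *\<^sub>R d) \<bullet> d"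
    and "DERIV (\<lambda>t. g (xs + t *\<^sub>R d) \<bullet> d) t :> d \<bullet> (H (xs + t *\<^sub>R d) *v d)"
proof -
  have l: "((\<lambda>t. xs + t *\<^sub>R d) has_derivative (\<lambda>h. h *\<^sub>R d)) (at t)"
    by (auto intro!: derivative_eq_intros)
  have D: "((\<lambda>t. f (xs + t *\<^sub>R d)) has_derivative (\<lambda>h. g (xs + t *\<^sub>R d) \<bullet> (h *\<^sub>R d))) (at t)"
    using has_derivative_compose[OF l grad] by (simp add: o_def)
  show "DERIV (\<lambda>t. f (xs + t *\<^sub>R d)) t :> g (xs + t *\<^sub>R d) \<bullet> d"
    unfolding has_field_derivative_def by (rule has_derivative_eq_rhs[OF D]) (simp add: fun_eq_iff)
  have "((\<lambda>t. g (xs + t *\<^sub>R d)) has_derivative (\<lambda>h. H (xs + t *\<^sub>R d) *v (h *\<^sub>R d))) (at t)"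
    using has_derivative_compose[OF l hess] by (simp add: o_def)
  then have D2: "((\<lambda>t. g (xs + t *\<^sub>R d) \<bullet> d) has_derivative (\<lambda>h. (H (xs + t *\<^sub>R d) *v (h *\<^sub>R d)) \<bullet> d)) (at t)"
    by (auto intro!: derivative_eq_intros)
  show "DERIV (\<lambda>t. g (xs + t *\<^sub>R d) \<bullet> d) t :> d \<bullet> (H (xs + t *\<^sub>R d) *v d)"
    unfolding has_field_derivative_def
    by (rule has_derivative_eq_rhs[OF D2]) (simp add: fun_eq_iff matrix_vector_mult_scaleR inner_commute)
qed

lemma quad_diff:
  fixes A B :: "real^'n^'n"
  assumes "onorm (\<lambda>v. (A - B) *v v) \<le> K"
  shows "\<bar>d \<bullet> (A *v d) - d \<bullet> (B *v d)\<bar> \<le> K * norm d ^ 2"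
proof -
  have bl: "bounded_linear (\<lambda>v. (A - B) *v v)"
    by (simp add: linear_conv_bounded_linear)
  have "\<bar>d \<bullet> (A *v d) - d \<bullet> (B *v d)\<bar> = \<bar>d \<bullet> ((A - B) *v d)\<bar>"
    by (simp add: matrix_vector_mult_diff_rdistrib inner_diff_right)
  also have "\<dots> \<le> norm d * norm ((A - B) *v d)" by (rule Cauchy_Schwarz_ineq2)
  also have "\<dots> \<le> norm d * (onorm (\<lambda>v. (A - B) *v v) * norm d)"
    using onorm[OF bl, of d] by (simp add: mult_left_mono)
  also have "\<dots> \<le> norm d * (K * norm d)"
    using assms by (simp add: mult_left_mono mult_right_mono)
  finally show ?thesis by (simp add: power2_eq_square mult_ac)
qed
lemma cubic:
  fixes s v :: real
  assumes "0 < v" "v \<le> 1" "v < s" "s \<le> 2"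
  shows "v^2/3 < s^2/2 - s^3/6"
proof -
  have "v^3 \<le> v^2" using assms by (simp add: power_le_imp_le_exp[of 1] power_decreasing)
  have f: "s^2/2 - s^3/6 - (v^2/2 - v^3/6) = (s - v) * (3 * (s+v) - (s^2 + s * v + v^2)) / 6"
    by (simp add: algebra_simps power2_eq_square power3_eq_cube)
  have "s^2 \<le> 2 * s" using assms by (simp add: power2_eq_square)
  moreover have "s * v \<le> s" using assms by (simp add: mult_left_le)
  moreover have "v^2 \<le> v" using assms by (simp add: power2_eq_square mult_left_le)
  ultimately have "0 < 3 * (s+v) - (s^2 + s * v + v^2)" using assms by (smt (verit))
  then have "0 < (s - v) * (3 * (s+v) - (s^2 + s * v + v^2)) / 6" using assms by simp
  then show ?thesis using f \<open>v^3 \<le> v^2\<close> by linarith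
qed
lemma aux_ineq:
  fixes s nu :: real
  assumes "s^2 \<le> nu^2" "s^3 \<le> s^2" "0 \<le> s^2"
  shows "s^2/2 + s^3/6 \<le> nu^2"
  using assms by linarith

theorem lemmaB2:
  fixes f :: "real^'n \<Rightarrow> real"
    and g :: "real^'n \<Rightarrow> real^'n"
    and H :: "real^'n \<Rightarrow> real^'n^'n"
    and xs :: "real^'n"
    and lmin lmax L nu :: real
  assumes grad: "\<And>x. (f has_derivative (\<lambda>h. g x \<bullet> h)) (at x)"
    and hess: "\<And>x. (g has_derivative (\<lambda>h. H x *v h)) (at x)"
    and hess_cont: "continuous_on UNIV H"
    and lmin_pos: "0 < lmin" and lmin_le: "lmin \<le> lmax"
    and lower: "\<And>x v. lmin * (v \<bullet> v) \<le> v \<bullet> (H x *v v)"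
    and upper: "\<And>x v. v \<bullet> (H x *v v) \<le> lmax * (v \<bullet> v)"
    and xs_min: "\<And>x. f xs \<le> f x"
    and xs_unique: "\<And>y. (\<forall>x. f y \<le> f x) \<Longrightarrow> y = xs"
    and L_pos: "0 < L"
    and lipschitz: "\<And>x y. onorm (\<lambda>v. (H x - H y) *v v) \<le> L * norm (x - y)"
    and nu: "0 < nu" "nu \<le> 1"
  shows "nbhd_bar f xs lmin L (nu\<^sup>2 / 3) \<subseteq> nbhd (H xs) xs lmin L nu
       \<and> nbhd (H xs) xs lmin L nu \<subseteq> nbhd_bar f xs lmin L (nu\<^sup>2)"
proof -
  define m where "m = sqrt lmin"
  have m_pos: "0 < m" using lmin_pos by (simp add: m_def)
  have m2: "m^2 = lmin" using lmin_pos by (simp add: m_def)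
  have p32: "lmin powr (3/2) = m^3"
  proof -
    have "lmin powr (3/2) = lmin powr 1 * lmin powr (1/2)" using lmin_pos powr_add[of lmin 1 "1/2"] by simp
    also have "\<dots> = lmin * sqrt lmin" using lmin_pos by (simp add: powr_half_sqrt)
    finally show ?thesis using m2 by (simp add: m_def power3_eq_cube power2_eq_square)
  qed
  have l3: "lmin ^ 3 = m^6" using m2 by (metis power_mult numeral_times_numeral semiring_norm(12) num_double mult_2 numeral_Bit0 numeral_Bit1 one_plus_numeral)
  have key: "f (xs + d) - f xs \<le> r^2/2 + L*r^3/(6*m^3) \<and> r^2/2 - L*r^3/(6*m^3) \<le> f (xs + d) - f xs
             \<and> (\<forall>t. 0 \<le> t \<and> t \<le> 1 \<longrightarrow> f (xs + t *\<^sub>R d) \<le> f (xs + d))"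
    if r: "r = anorm (H xs) d" for d r
  proof -
    define phi where "phi t = f (xs + t *\<^sub>R d)" for t
    define psi where "psi t = g (xs + t *\<^sub>R d) \<bullet> d" for t
    define psi2 where "psi2 t = d \<bullet> (H (xs + t *\<^sub>R d) *v d)" for t
    define a where "a = d \<bullet> (H xs *v d)"
    define e where "e = norm d"
    have d1: "DERIV phi t :> psi t" for t unfolding phi_def psi_def by (rule vec_facts(1)[OF grad hess])
    have d2: "DERIV psi t :> psi2 t" for t unfolding psi_def psi2_def by (rule vec_facts(2)[OF grad hess])
    have z: "psi 0 = 0"
      by (rule DERIV_local_min[OF d1, of 1]) (auto simp: phi_def xs_min)
    have b: "\<bar>psi2 t - a\<bar> \<le> L * e^3 * t" if "0 \<le> t" for t
    proof -
      have "\<bar>psi2 t - a\<bar> \<le> L * norm (xs + t *\<^sub>R d - xs) * norm d ^ 2"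
        unfolding psi2_def a_def by (rule quad_diff[OF lipschitz])
      also have "\<dots> = L * e^3 * t" using that by (simp add: e_def power2_eq_square power3_eq_cube)
      finally show ?thesis .
    qed
    have a_ge: "lmin * e^2 \<le> a" using lower[where x=xs and v=d] by (simp add: a_def e_def power2_norm_eq_inner)
    have a_nn: "0 \<le> a" proof -
      have "0 \<le> lmin * e^2" using lmin_pos by simp
      then show ?thesis using a_ge by linarith
    qed
    have r2: "r^2 = a" using r a_nn by (simp add: anorm_def a_def)
    have r_nn: "0 \<le> r" using r a_nn by (simp add: anorm_def a_def)
    have e_nn: "0 \<le> e" by (simp add: e_def)
    have "(m*e)^2 \<le> r^2" using a_ge m2 r2 by (simp add: power_mult_distrib)
    then have "m*e \<le> r" using r_nn by (rule power2_le_imp_le)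
    then have "e \<le> r/m" using m_pos by (simp add: field_simps)
    then have "e^3 \<le> (r/m)^3" using e_nn by (rule power_mono)
    then have "L * e^3 \<le> L*((r/m)^3)" using L_pos by (intro mult_left_mono) auto
    then have c_le: "L * e^3 \<le> L*r^3/m^3" by (simp add: power_divide)
    have up: "phi 1 - phi 0 \<le> a/2 + (L*e^3)/6"
      apply (rule taylor_up[OF d1 d2 z])
      subgoal for t using b[of t] by (simp add: abs_le_iff mult.commute)
      done
    have dm1: "DERIV (\<lambda>t. - phi t) t :> - psi t" for t using DERIV_minus[OF d1[of t]] by simp
    have dm2: "DERIV (\<lambda>t. - psi t) t :> - psi2 t" for t using DERIV_minus[OF d2[of t]] by simp
    have zm: "- psi 0 = 0" using z by simp
    have bm: "- psi2 t \<le> - a + L * e^3 * t" if "0 \<le> t" "t \<le> 1" for t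
      using b[OF that(1)] by (simp add: abs_le_iff)
    have "(\<lambda>t. - phi t) 1 - (\<lambda>t. - phi t) 0 \<le> (-a)/2 + (L*e^3)/6"
      by (rule taylor_up[OF dm1 dm2 zm bm])
    then have lo: "a/2 - (L*e^3)/6 \<le> phi 1 - phi 0" by simp
    have psi2_nn: "0 \<le> psi2 s" for s
    proof -
      have "0 \<le> lmin * (d \<bullet> d)" using lmin_pos by simp
      then show ?thesis using lower[where x="xs + s *\<^sub>R d" and v=d] unfolding psi2_def by linarith
    qed
    have mo: "f (xs + t *\<^sub>R d) \<le> f (xs + d)" if "0 \<le> t" "t \<le> 1" for t
      using mono1[OF d1 d2 z psi2_nn that] unfolding phi_def by simp
    have e1: "L*r^3/(6*m^3) = (L*r^3/m^3)/6" by simp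
    have p0: "phi 0 = f xs" and p1: "phi 1 = f (xs + d)" by (simp_all add: phi_def)
    have q1: "a/2 + L*e^3/6 \<le> r^2/2 + L*r^3/m^3/6" using c_le r2 by simp
    have q2: "r^2/2 - L*r^3/m^3/6 \<le> a/2 - L*e^3/6" using c_le r2 by simp
    have h1: "f (xs + d) - f xs \<le> r^2/2 + L*r^3/(6*m^3)"
      unfolding e1 using order_trans[OF up q1] unfolding p0 p1 .
    have h2: "r^2/2 - L*r^3/(6*m^3) \<le> f (xs + d) - f xs"
      unfolding e1 using order_trans[OF q2 lo] unfolding p0 p1 .
    show ?thesis using h1 h2 mo by blast
  qed
  have anorm_scale: "anorm (H xs) (t *\<^sub>R d) = t * anorm (H xs) d" if "0 \<le> t" for t d
  proof -
    have "anorm (H xs) (t *\<^sub>R d) = sqrt (t^2 * (d \<bullet> (H xs *v d)))"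
      by (simp add: anorm_def matrix_vector_mult_scaleR power2_eq_square mult_ac)
    also have "\<dots> = t * anorm (H xs) d" using that by (simp add: real_sqrt_mult anorm_def)
    finally show ?thesis .
  qed
  define K where "K = m^6/L^2"
  have K_pos: "0 < K" using m_pos L_pos by (simp add: K_def)
  have conv: "r^2/2 + s*L*r^3/(6*m^3) = K * (sp^2/2 + s * sp^3/6)" if "r = sp * m^3 / L" for r sp s
    unfolding that using m_pos L_pos by (simp add: K_def field_simps power2_eq_square power3_eq_cube eval_nat_numeral)
  have bar: "x \<in> nbhd_bar f xs lmin L c \<longleftrightarrow> f x - f xs \<le> K * c" for x c
    by (simp add: nbhd_bar_def K_def l3 mult_ac) linarith
  have nb: "x \<in> nbhd (H xs) xs lmin L nu \<longleftrightarrow> anorm (H xs) (x - xs) \<le> nu * m^3 / L" for x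
    by (simp add: nbhd_def p32)
  show ?thesis
  proof
    show "nbhd_bar f xs lmin L (nu\<^sup>2 / 3) \<subseteq> nbhd (H xs) xs lmin L nu"
    proof
      fix x assume xb: "x \<in> nbhd_bar f xs lmin L (nu\<^sup>2 / 3)"
      define d where "d = x - xs"
      define r where "r = anorm (H xs) d"
      show "x \<in> nbhd (H xs) xs lmin L nu"
      proof (rule ccontr)
        assume "x \<notin> nbhd (H xs) xs lmin L nu"
        then have rbig: "nu * m^3 / L < r" by (simp add: nb r_def d_def)
        define s where "s = r * L / m^3"
        have s_gt: "nu < s" using rbig m_pos L_pos by (simp add: s_def field_simps)
        define sp where "sp = min s 2"
        define t where "t = sp / s"
        have s_pos: "0 < s" using s_gt nu by linarith
        have t01: "0 \<le> t" "t \<le> 1" using s_pos by (auto simp: t_def sp_def)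
        have sp_gt: "nu < sp" "sp \<le> 2" using s_gt nu by (auto simp: sp_def)
        have rt: "anorm (H xs) (t *\<^sub>R d) = sp * m^3 / L"
        proof -
          have r_pos: "0 < r" using s_pos m_pos L_pos by (simp add: s_def zero_less_divide_iff zero_less_mult_iff)
          have "anorm (H xs) (t *\<^sub>R d) = t * r" using anorm_scale[OF t01(1)] by (simp add: r_def)
          also have "\<dots> = sp * m^3 / L" using r_pos m_pos L_pos by (simp add: t_def s_def field_simps)
          finally show ?thesis .
        qed
        have "K * (sp^2/2 + (-1)* sp^3/6) \<le> f (xs + t *\<^sub>R d) - f xs"
          using conjunct1[OF conjunct2[OF key[OF refl, of "t *\<^sub>R d"]]] conv[OF rt, of "-1"] rt
          by simp
        also have "\<dots> \<le> f x - f xs"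
          using key[OF refl, of d] t01 by (simp add: d_def)
        also have "\<dots> \<le> K * (nu^2/3)" using xb bar by blast
        finally have "sp^2/2 - sp^3/6 \<le> nu^2/3" using K_pos by simp
        with cubic[OF nu sp_gt] show False by linarith
      qed
    qed
  next
    show "nbhd (H xs) xs lmin L nu \<subseteq> nbhd_bar f xs lmin L (nu\<^sup>2)"
    proof
      fix x assume xn: "x \<in> nbhd (H xs) xs lmin L nu"
      define d where "d = x - xs"
      define r where "r = anorm (H xs) d"
      define s where "s = r * L / m^3"
      have r_nn: "0 \<le> r"
      proof -
        have "0 \<le> lmin * (d \<bullet> d)" using lmin_pos by simp
        then have "0 \<le> d \<bullet> (H xs *v d)" using lower[where x=xs and v=d] by linarith
        then show ?thesis by (simp add: r_def anorm_def)
      qed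
      have rs: "r = s * m^3 / L" using m_pos L_pos by (simp add: s_def)
      have s_le: "s \<le> nu" using xn m_pos L_pos by (simp add: nb s_def r_def d_def field_simps)
      have s_nn: "0 \<le> s" using r_nn m_pos L_pos by (simp add: s_def)
      have "f x - f xs \<le> K * (s^2/2 + 1 * s^3/6)"
        using conjunct1[OF key[OF r_def]] conv[OF rs, of 1] by (simp add: d_def)
      also have "\<dots> \<le> K * nu^2"
      proof -
        have "s^2 \<le> nu^2" using s_nn s_le by (simp add: power_mono)
        moreover have "s^3 \<le> s^2" using s_nn s_le nu by (simp add: power_decreasing)
        moreover have "0 \<le> s^2" by simp
        ultimately have "s^2/2 + s^3/6 \<le> nu^2" by (rule aux_ineq)
        then show ?thesis using K_pos by simp
      qed
      finally show "x \<in> nbhd_bar f xs lmin L (nu\<^sup>2)" using bar by blast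
    qed
  qed
qed

end
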